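(* For all real $y\ge2$ and all $n\ge1$, $|P_n(y)|\le 3\cdot n!\,y^n$; moreover $|P_0(y)|\le y$ for $y\ge2$.
   Context: The polynomials $P_n(y)$ are defined by $P_0(y)=y-1$ and, for $n\ge1$, $P_n=nP_{n-1}-P'_{n-1}+\frac{1}{n}\sum_{k=1}^{n-1}k\{(k-1)P_{k-1}-P_k-P'_{k-1}\}P_{n-k-1}$, primes denoting derivatives in $y$ (equivalently, $1+\sum_{n\ge1}P_{n-1}(y)x^{-n}$ is the unique formal solution of $V=1+\frac{y}{x}-\frac{1}{x}V-V_x-\frac{1}{x}V_y+\frac{1}{x}\log V$). *)

theory Defs
  imports "HOL-Computational_Algebra.Polynomial"
begin

definition P_step :: "real poly list \<Rightarrow> nat \<Rightarrow> real poly" where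
  "P_step ps n =
     smult (of_nat n) (ps ! (n - 1)) - pderiv (ps ! (n - 1))
     + smult (1 / of_nat n)
         (\<Sum>k = 1..n - 1. smult (of_nat k)
             (smult (of_nat (k - 1)) (ps ! (k - 1)) - ps ! k - pderiv (ps ! (k - 1)))
             * ps ! (n - k - 1))"

fun P_list :: "nat \<Rightarrow> real poly list" where
  "P_list 0 = [[:-1, 1:]]"
| "P_list (Suc m) = P_list m @ [P_step (P_list m) (Suc m)]"

definition P :: "nat \<Rightarrow> real poly" where
  "P n = P_list n ! n"

end

theory Submission
  imports Defs "HOL-Computational_Algebra.Polynomial"
begin

definition pabs :: "real poly \<Rightarrow> real poly" where "pabs p = map_poly abs p"

lemma coeff_pabs [simp]: "coeff (pabs p) n = \<bar>coeff p n\<bar>"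
  by (simp add: pabs_def coeff_map_poly)

definition mv :: "real poly \<Rightarrow> real \<Rightarrow> real" where "mv p y = poly (pabs p) y"

lemma poly_nonneg_coeffs:
  assumes "\<And>n. coeff r n \<ge> 0" "(y::real) \<ge> 0"
  shows "poly r y \<ge> 0"
  unfolding poly_altdef using assms by (intro sum_nonneg) auto

lemma poly_le_coeffs:
  assumes "\<And>n. coeff p n \<le> coeff q n" "(y::real) \<ge> 0"
  shows "poly p y \<le> poly q y"
proof -
  have "poly (q - p) y \<ge> 0" using assms by (intro poly_nonneg_coeffs) auto
  thus ?thesis by simp
qed

lemma mv_nonneg: "y \<ge> 0 \<Longrightarrow> mv p y \<ge> 0"
  unfolding mv_def by (rule poly_nonneg_coeffs) auto

lemma abs_poly_le_mv: assumes "y \<ge> 0" shows "\<bar>poly p y\<bar> \<le> mv p y"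
proof -
  have "\<bar>poly p y\<bar> = \<bar>\<Sum>i\<le>degree p. coeff p i * y ^ i\<bar>" by (simp add: poly_altdef)
  also have "\<dots> \<le> (\<Sum>i\<le>degree p. \<bar>coeff p i * y ^ i\<bar>)" by (rule sum_abs)
  also have "\<dots> = (\<Sum>i\<le>degree p. coeff (pabs p) i * y ^ i)"
    using assms by (simp add: abs_mult)
  also have "\<dots> = poly (pabs p) y"
    unfolding poly_altdef[of "pabs p"] 
    by (rule sum.mono_neutral_left) (auto simp: coeff_eq_0 degree_map_poly pabs_def)
  finally show ?thesis by (simp add: mv_def)
qed

lemma mv_add: "y \<ge> 0 \<Longrightarrow> mv (p + q) y \<le> mv p y + mv q y"
  unfolding mv_def poly_add[symmetric] by (rule poly_le_coeffs) (auto simp: abs_triangle_ineq)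

lemma mv_uminus [simp]: "mv (- p) y = mv p y"
  unfolding mv_def by (rule arg_cong[where f="\<lambda>q. poly q y"], rule poly_eqI) simp

lemma mv_diff: "y \<ge> 0 \<Longrightarrow> mv (p - q) y \<le> mv p y + mv q y"
  using mv_add[of y p "-q"] by simp

lemma mv_smult [simp]: "mv (smult c p) y = \<bar>c\<bar> * mv p y"
proof -
  have "pabs (smult c p) = smult \<bar>c\<bar> (pabs p)" by (rule poly_eqI) (simp add: abs_mult)
  thus ?thesis by (simp add: mv_def)
qed

lemma mv_mult: assumes "y \<ge> 0" shows "mv (p * q) y \<le> mv p y * mv q y"
proof -
  have "\<And>n. coeff (pabs (p * q)) n \<le> coeff (pabs p * pabs q) n"
  proof -
    fix n
    have "coeff (pabs (p * q)) n = \<bar>\<Sum>i\<le>n. coeff p i * coeff q (n-i)\<bar>" by (simp add: coeff_mult)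
    also have "\<dots> \<le> (\<Sum>i\<le>n. \<bar>coeff p i * coeff q (n-i)\<bar>)" by (rule sum_abs)
    also have "\<dots> = coeff (pabs p * pabs q) n" by (simp add: coeff_mult abs_mult)
    finally show "coeff (pabs (p * q)) n \<le> coeff (pabs p * pabs q) n" .
  qed
  hence "poly (pabs (p*q)) y \<le> poly (pabs p * pabs q) y" using assms by (intro poly_le_coeffs) auto
  thus ?thesis by (simp add: mv_def)
qed

lemma mv_zero [simp]: "mv 0 y = 0"
  by (simp add: mv_def pabs_def)

lemma mv_sum: assumes "y \<ge> 0" shows "mv (\<Sum>k\<in>S. f k) y \<le> (\<Sum>k\<in>S. mv (f k) y)"
proof (cases "finite S")
  case True
  thus ?thesis
  proof (induction S rule: finite_induct)
    case empty thus ?case by simp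
  next
    case (insert x F)
    have "mv (\<Sum>k\<in>insert x F. f k) y = mv (f x + (\<Sum>k\<in>F. f k)) y" using insert by simp
    also have "\<dots> \<le> mv (f x) y + mv (\<Sum>k\<in>F. f k) y" using assms by (rule mv_add)
    also have "\<dots> \<le> mv (f x) y + (\<Sum>k\<in>F. mv (f k) y)" using insert by simp
    finally show ?case using insert by simp
  qed
qed simp

lemma pabs_pderiv: "pabs (pderiv p) = pderiv (pabs p)"
  by (rule poly_eqI) (simp add: coeff_pderiv abs_mult)

lemma mv_pderiv: assumes "y \<ge> 0" shows "y * mv (pderiv p) y \<le> real (degree p) * mv p y"
proof -
  let ?s = "pabs p"
  have "\<And>n. coeff (pCons 0 (pderiv ?s)) n \<le> coeff (smult (real (degree p)) ?s) n"
  proof -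
    fix n
    show "coeff (pCons 0 (pderiv ?s)) n \<le> coeff (smult (real (degree p)) ?s) n"
    proof (cases n)
      case 0 thus ?thesis by simp
    next
      case (Suc m)
      show ?thesis
      proof (cases "n \<le> degree p")
        case True
        thus ?thesis using Suc by (auto simp: coeff_pderiv intro!: mult_right_mono)
      next
        case False
        thus ?thesis using Suc by (simp add: coeff_pderiv coeff_eq_0)
      qed
    qed
  qed
  hence "poly (pCons 0 (pderiv ?s)) y \<le> poly (smult (real (degree p)) ?s) y"
    using assms by (intro poly_le_coeffs) auto
  thus ?thesis by (simp add: mv_def pabs_pderiv)
qed

lemma pderiv_sum: "pderiv (\<Sum>k\<in>S. f k) = (\<Sum>k\<in>S. pderiv (f k))"
  by (induction S rule: infinite_finite_induct) (auto simp: pderiv_add)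

lemma length_P_list [simp]: "length (P_list n) = Suc n"
  by (induction n) auto

lemma P_list_nth: "j \<le> n \<Longrightarrow> P_list n ! j = P j"
proof (induction n)
  case 0 thus ?case by (simp add: P_def)
next
  case (Suc n)
  show ?case
  proof (cases "j \<le> n")
    case True
    thus ?thesis using Suc by (simp add: nth_append)
  next
    case False
    hence "j = Suc n" using Suc.prems by simp
    thus ?thesis by (simp add: P_def)
  qed
qed

definition X :: "nat \<Rightarrow> real poly" where
  "X k = smult (of_nat (k - 1)) (P (k - 1)) - P k - pderiv (P (k - 1))"

lemma P_0: "P 0 = [:-1, 1:]" by (simp add: P_def)

lemma P_rec:
  assumes "n \<ge> 1"
  shows "P n = smult (of_nat n) (P (n-1)) - pderiv (P (n-1))
     + smult (1 / of_nat n) (\<Sum>k = 1..n - 1. smult (of_nat k) (X k) * P (n - k - 1))"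
proof -
  obtain m where m: "n = Suc m" using assms by (cases n) auto
  have "P n = P_step (P_list m) n" by (simp add: P_def m nth_append)
  also have "\<dots> = smult (of_nat n) (P (n-1)) - pderiv (P (n-1))
     + smult (1 / of_nat n) (\<Sum>k = 1..n - 1. smult (of_nat k) (X k) * P (n - k - 1))"
    unfolding P_step_def X_def m
    by (intro arg_cong2[where f="(+)"] arg_cong2[where f="smult"] sum.cong refl)
       (auto simp: P_list_nth)
  finally show ?thesis .
qed

lemma degree_P: "degree (P n) \<le> max n 1"
proof (induction n rule: less_induct)
  case (less n)
  show ?case
  proof (cases "n = 0")
    case True thus ?thesis by (simp add: P_0)
  next
    case False
    hence n1: "n \<ge> 1" by simp
    have dP: "\<And>j. j < n \<Longrightarrow> degree (P j) \<le> max j 1" using less by blast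
    have d1: "degree (smult (of_nat n) (P (n-1)) - pderiv (P (n-1))) \<le> n"
    proof -
      have "degree (P (n-1)) \<le> n" using dP[of "n-1"] n1 by simp
      thus ?thesis
        by (intro order.trans[OF degree_diff_le]) (auto simp: degree_pderiv intro: order.trans[OF degree_smult_le])
    qed
    have d2: "degree (\<Sum>k = 1..n - 1. smult (of_nat k) (X k) * P (n - k - 1)) \<le> n"
    proof (rule degree_sum_le)
      fix k assume k: "k \<in> {1..n-1}"
      have dX: "degree (X k) \<le> k"
      proof -
        have "k - 1 < n" using k by auto
        hence a: "degree (P (k-1)) \<le> k" using dP[of "k-1"] k by (auto simp: max_def split: if_splits)
        have b: "degree (P k) \<le> k" using dP[of k] k by auto
        have c: "degree (pderiv (P (k-1))) \<le> k" using a by (simp add: degree_pderiv)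
        have d: "degree (smult (of_nat (k - 1)) (P (k - 1)) :: real poly) \<le> k"
          using a degree_smult_le order.trans by blast
        have "degree (smult (of_nat (k - 1)) (P (k - 1)) - P k) \<le> k"
          by (rule degree_diff_le[OF d b])
        thus ?thesis unfolding X_def by (rule degree_diff_le[OF _ c])
      qed
      have dQ: "degree (P (n - k - 1)) \<le> n - k"
        using dP[of "n-k-1"] k by auto
      have "degree (smult (of_nat k) (X k) * P (n - k - 1)) \<le> degree (smult (of_nat k) (X k)) + degree (P (n - k - 1))"
        by (rule degree_mult_le)
      also have "\<dots> \<le> k + (n - k)" using dX dQ degree_smult_le[of "of_nat k" "X k"] by linarith
      also have "k + (n - k) = n" using k by auto
      finally show "degree (smult (of_nat k) (X k) * P (n - k - 1)) \<le> n" .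
    qed simp
    have d3: "degree (smult (1 / of_nat n) (\<Sum>k = 1..n - 1. smult (of_nat k) (X k) * P (n - k - 1))) \<le> n"
      using d2 degree_smult_le order.trans by blast
    have "degree (P n) \<le> n"
      unfolding P_rec[OF n1] by (rule degree_add_le[OF d1 d3])
    thus ?thesis by simp
  qed
qed

definition A :: "real \<Rightarrow> nat \<Rightarrow> real" where "A y j = mv (P j) y"
definition B :: "real \<Rightarrow> nat \<Rightarrow> real" where "B y j = y * mv (pderiv (P j)) y"
definition C :: "real \<Rightarrow> nat \<Rightarrow> real" where "C y j = y^2 * mv (pderiv (pderiv (P j))) y"

lemma A_nonneg: "y \<ge> 0 \<Longrightarrow> A y j \<ge> 0" by (simp add: A_def mv_nonneg)
lemma B_nonneg: "y \<ge> 0 \<Longrightarrow> B y j \<ge> 0" by (simp add: B_def mv_nonneg)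
lemma C_nonneg: "y \<ge> 0 \<Longrightarrow> C y j \<ge> 0" by (simp add: C_def mv_nonneg)

lemma mv_pd: "y > 0 \<Longrightarrow> mv (pderiv (P j)) y = B y j / y"
  by (simp add: B_def)
lemma mv_pdd: "y > 0 \<Longrightarrow> y * mv (pderiv (pderiv (P j))) y = C y j / y"
  by (simp add: C_def power2_eq_square)

lemma C_le: assumes "y > 0" shows "C y j \<le> real (j - 1) * B y j"
proof -
  let ?q = "pderiv (P j)"
  have dq: "degree ?q \<le> j - 1" using degree_P[of j] by (simp add: degree_pderiv)
  have "C y j = y * (y * mv (pderiv ?q) y)" by (simp add: C_def power2_eq_square)
  also have "\<dots> \<le> y * (real (degree ?q) * mv ?q y)"
    using assms by (intro mult_left_mono mv_pderiv) auto
  also have "\<dots> = real (degree ?q) * B y j" by (simp add: B_def)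
  also have "\<dots> \<le> real (j - 1) * B y j"
    using dq assms by (intro mult_right_mono B_nonneg) auto
  finally show ?thesis .
qed

lemma mvX: assumes "y > 0"
  shows "mv (X k) y \<le> real (k-1) * A y (k-1) + A y k + B y (k-1) / y"
proof -
  have "mv (X k) y \<le> mv (smult (of_nat (k - 1)) (P (k - 1)) - P k) y + mv (pderiv (P (k - 1))) y"
    unfolding X_def using assms by (intro mv_diff) auto
  also have "\<dots> \<le> (mv (smult (of_nat (k - 1)) (P (k - 1))) y + mv (P k) y) + mv (pderiv (P (k - 1))) y"
    using assms by (intro add_right_mono mv_diff) auto
  also have "\<dots> = real (k-1) * A y (k-1) + A y k + B y (k-1) / y"
    using assms by (simp add: A_def mv_pd)
  finally show ?thesis .
qed

lemma mvX': assumes "y > 0"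
  shows "y * mv (pderiv (X k)) y \<le> real (k-1) * B y (k-1) + B y k + C y (k-1) / y"
proof -
  have e: "pderiv (X k) = smult (of_nat (k - 1)) (pderiv (P (k - 1))) - pderiv (P k) - pderiv (pderiv (P (k - 1)))"
    by (simp add: X_def pderiv_diff pderiv_smult)
  have "mv (pderiv (X k)) y \<le> mv (smult (of_nat (k - 1)) (pderiv (P (k - 1))) - pderiv (P k)) y + mv (pderiv (pderiv (P (k - 1)))) y"
    unfolding e using assms by (intro mv_diff) auto
  also have "\<dots> \<le> (mv (smult (of_nat (k - 1)) (pderiv (P (k - 1)))) y + mv (pderiv (P k)) y) + mv (pderiv (pderiv (P (k - 1)))) y"
    using assms by (intro add_right_mono mv_diff) auto
  finally have "y * mv (pderiv (X k)) y \<le> y * ((mv (smult (of_nat (k - 1)) (pderiv (P (k - 1)))) y + mv (pderiv (P k)) y) + mv (pderiv (pderiv (P (k - 1)))) y)"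
    using assms by (intro mult_left_mono) auto
  also have "\<dots> = real (k-1) * B y (k-1) + B y k + C y (k-1) / y"
    using assms mv_pdd[OF assms, of "k-1"] by (simp add: B_def algebra_simps)
  finally show ?thesis .
qed

lemma ineqA:
  assumes "y > 0" "n \<ge> 1"
  shows "A y n \<le> real n * A y (n-1) + B y (n-1) / y + (1 / real n) * (\<Sum>k=1..n-1. real k *
          (real (k-1) * (A y (k-1) * A y (n-k-1)) + A y k * A y (n-k-1) + B y (k-1) / y * A y (n-k-1)))"
proof -
  let ?S = "\<Sum>k = 1..n - 1. smult (of_nat k) (X k) * P (n - k - 1)"
  have y0: "y \<ge> 0" using assms by simp
  have "A y n \<le> mv (smult (of_nat n) (P (n-1)) - pderiv (P (n-1))) y + mv (smult (1 / of_nat n) ?S) y"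
    unfolding A_def P_rec[OF assms(2)] using y0 by (rule mv_add)
  also have "\<dots> \<le> (real n * A y (n-1) + B y (n-1) / y) + (1 / real n) * mv ?S y"
    using assms mv_diff[OF y0, of "smult (of_nat n) (P (n-1))" "pderiv (P (n-1))"]
    by (intro add_mono) (auto simp: A_def mv_pd)
  also have "mv ?S y \<le> (\<Sum>k=1..n-1. mv (smult (of_nat k) (X k) * P (n - k - 1)) y)"
    using y0 by (rule mv_sum)
  also have "\<dots> \<le> (\<Sum>k=1..n-1. real k * ((real (k-1) * A y (k-1) + A y k + B y (k-1) / y) * A y (n-k-1)))"
  proof (rule sum_mono)
    fix k assume "k \<in> {1..n-1}"
    have "mv (smult (of_nat k) (X k) * P (n - k - 1)) y \<le> mv (smult (of_nat k) (X k)) y * A y (n-k-1)"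
      unfolding A_def using y0 by (rule mv_mult)
    also have "\<dots> = real k * (mv (X k) y * A y (n-k-1))" by simp
    also have "\<dots> \<le> real k * ((real (k-1) * A y (k-1) + A y k + B y (k-1) / y) * A y (n-k-1))"
      using assms by (intro mult_left_mono mult_right_mono mvX A_nonneg) auto
    finally show "mv (smult (of_nat k) (X k) * P (n - k - 1)) y \<le> \<dots>" .
  qed
  finally show ?thesis using assms by (simp add: algebra_simps divide_right_mono)
qed

lemma pderiv_P_rec:
  assumes "n \<ge> 1"
  shows "pderiv (P n) = smult (of_nat n) (pderiv (P (n-1))) - pderiv (pderiv (P (n-1)))
     + smult (1 / of_nat n) (\<Sum>k = 1..n - 1. pderiv (smult (of_nat k) (X k) * P (n - k - 1)))"
  by (subst P_rec[OF assms]) (simp add: pderiv_add pderiv_diff pderiv_smult pderiv_sum)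

lemma ineqB:
  assumes "y > 0" "n \<ge> 1"
  shows "B y n \<le> real n * B y (n-1) + C y (n-1) / y + (1 / real n) * (\<Sum>k=1..n-1. real k *
          (real (k-1) * (B y (k-1) * A y (n-k-1)) + B y k * A y (n-k-1) + C y (k-1) / y * A y (n-k-1)
          + (real (k-1) * (A y (k-1) * B y (n-k-1)) + A y k * B y (n-k-1) + B y (k-1) / y * B y (n-k-1))))"
proof -
  let ?S = "\<Sum>k = 1..n - 1. pderiv (smult (of_nat k) (X k) * P (n - k - 1))"
  have y0: "y \<ge> 0" using assms by simp
  have "mv (pderiv (P n)) y \<le> mv (smult (of_nat n) (pderiv (P (n-1))) - pderiv (pderiv (P (n-1)))) y + mv (smult (1 / of_nat n) ?S) y"
    unfolding pderiv_P_rec[OF assms(2)] using y0 by (rule mv_add)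
  also have "\<dots> \<le> (real n * mv (pderiv (P (n-1))) y + mv (pderiv (pderiv (P (n-1)))) y) + (1 / real n) * mv ?S y"
    using assms mv_diff[OF y0, of "smult (of_nat n) (pderiv (P (n-1)))" "pderiv (pderiv (P (n-1)))"]
    by (intro add_mono) auto
  finally have h1: "mv (pderiv (P n)) y \<le> (real n * mv (pderiv (P (n-1))) y + mv (pderiv (pderiv (P (n-1)))) y) + (1 / real n) * mv ?S y" .
  have "mv ?S y \<le> (\<Sum>k=1..n-1. mv (pderiv (smult (of_nat k) (X k) * P (n - k - 1))) y)"
    using y0 by (rule mv_sum)
  also have "\<dots> \<le> (\<Sum>k=1..n-1. real k * ((y * mv (pderiv (X k)) y) * A y (n-k-1) + mv (X k) y * B y (n-k-1)) / y)"
  proof (rule sum_mono)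
    fix k assume "k \<in> {1..n-1}"
    have e: "pderiv (smult (of_nat k) (X k) * P (n - k - 1)) = smult (of_nat k) (X k * pderiv (P (n - k - 1))) + smult (of_nat k) (P (n - k - 1) * pderiv (X k))"
      by (simp add: pderiv_mult pderiv_smult smult_add_right)
    have "mv (pderiv (smult (of_nat k) (X k) * P (n - k - 1))) y \<le> mv (smult (of_nat k) (X k * pderiv (P (n - k - 1)))) y + mv (smult (of_nat k) (P (n - k - 1) * pderiv (X k))) y"
      unfolding e using y0 by (rule mv_add)
    also have "\<dots> = real k * mv (X k * pderiv (P (n - k - 1))) y + real k * mv (P (n - k - 1) * pderiv (X k)) y" by simp
    also have "\<dots> \<le> real k * (mv (X k) y * mv (pderiv (P (n - k - 1))) y) + real k * (mv (P (n - k - 1)) y * mv (pderiv (X k)) y)"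
      using y0 by (intro add_mono mult_left_mono mv_mult) auto
    also have "\<dots> = real k * ((y * mv (pderiv (X k)) y) * A y (n-k-1) + mv (X k) y * B y (n-k-1)) / y"
      using assms by (simp add: A_def B_def field_simps)
    finally show "mv (pderiv (smult (of_nat k) (X k) * P (n - k - 1))) y \<le> \<dots>" .
  qed
  also have "\<dots> \<le> (\<Sum>k=1..n-1. real k * ((real (k-1) * B y (k-1) + B y k + C y (k-1) / y) * A y (n-k-1)
       + (real (k-1) * A y (k-1) + A y k + B y (k-1) / y) * B y (n-k-1)) / y)"
    using assms
    by (intro sum_mono divide_right_mono mult_left_mono add_mono mult_right_mono mvX mvX' A_nonneg B_nonneg) auto
  finally have h2: "mv ?S y \<le> (\<Sum>k=1..n-1. real k * ((real (k-1) * B y (k-1) + B y k + C y (k-1) / y) * A y (n-k-1)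
       + (real (k-1) * A y (k-1) + A y k + B y (k-1) / y) * B y (n-k-1)) / y)" .
  have "y * mv (pderiv (P n)) y \<le> y * ((real n * mv (pderiv (P (n-1))) y + mv (pderiv (pderiv (P (n-1)))) y) + (1 / real n) *
     (\<Sum>k=1..n-1. real k * ((real (k-1) * B y (k-1) + B y k + C y (k-1) / y) * A y (n-k-1)
       + (real (k-1) * A y (k-1) + A y k + B y (k-1) / y) * B y (n-k-1)) / y))"
    using assms h1 h2 by (intro mult_left_mono order.trans[OF h1] add_left_mono) auto
  also have "\<dots> = real n * B y (n-1) + C y (n-1) / y + (1 / real n) * (\<Sum>k=1..n-1. real k *
          (real (k-1) * (B y (k-1) * A y (n-k-1)) + B y k * A y (n-k-1) + C y (k-1) / y * A y (n-k-1)
          + (real (k-1) * (A y (k-1) * B y (n-k-1)) + A y k * B y (n-k-1) + B y (k-1) / y * B y (n-k-1))))"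
  proof -
    have e1: "y * (real n * mv (pderiv (P (n-1))) y) = real n * B y (n-1)" by (simp add: B_def)
    have e2: "y * mv (pderiv (pderiv (P (n-1)))) y = C y (n-1) / y" using mv_pdd[OF assms(1)] .
    have e3: "y * (\<Sum>k=1..n-1. real k * ((real (k-1) * B y (k-1) + B y k + C y (k-1) / y) * A y (n-k-1)
       + (real (k-1) * A y (k-1) + A y k + B y (k-1) / y) * B y (n-k-1)) / y)
       = (\<Sum>k=1..n-1. real k *
          (real (k-1) * (B y (k-1) * A y (n-k-1)) + B y k * A y (n-k-1) + C y (k-1) / y * A y (n-k-1)
          + (real (k-1) * (A y (k-1) * B y (n-k-1)) + A y k * B y (n-k-1) + B y (k-1) / y * B y (n-k-1))))"
      using assms(1) by (simp add: sum_divide_distrib[symmetric] algebra_simps)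
    show ?thesis unfolding distrib_left e1 e2 using e3 by (simp add: algebra_simps)
  qed
  finally show ?thesis by (simp add: B_def)
qed

definition tabA :: "nat \<Rightarrow> real" where
 "tabA k = (if k = 0 then 3/2 else if k < 20 then
   [0, 2, 207/100, 11/5, 113/50, 221/100, 207/100, 187/100, 41/25, 7/5, 117/100, 97/100, 79/100, 16/25, 13/25, 21/50, 17/50, 27/100, 11/50, 9/50] ! k else 5/2)"
definition tabB :: "nat \<Rightarrow> real" where
 "tabB k = (if k = 0 then 1 else if k < 20 then
   [0, 1, 3/2, 219/100, 73/25, 18/5, 104/25, 457/100, 481/100, 489/100, 483/100, 233/50, 441/100, 41/10, 94/25, 341/100, 153/50, 68/25, 12/5, 21/10] ! k else 5)"
definition tabC :: "nat \<Rightarrow> real" where "tabC j = real (j - 1) * tabB j"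
definition ep :: "nat \<Rightarrow> nat" where "ep j = max j 1"

definition sing :: "(nat \<Rightarrow> real) \<Rightarrow> nat \<Rightarrow> nat \<Rightarrow> nat \<Rightarrow> real" where
  "sing f a s n = fact a * f a * (1/2)^(n + s - ep a)"
definition trm :: "(nat \<Rightarrow> real) \<Rightarrow> (nat \<Rightarrow> real) \<Rightarrow> nat \<Rightarrow> nat \<Rightarrow> nat \<Rightarrow> nat \<Rightarrow> real" where
  "trm f g a b s n = fact a * f a * fact b * g b * (1/2)^(n + s - ep a - ep b)"

definition TA :: "nat \<Rightarrow> real" where
 "TA n = real n * sing tabA (n-1) 0 n + sing tabB (n-1) 1 n
   + (1 / real n) * (\<Sum>k=1..n-1. real k *
       (real (k-1) * trm tabA tabA (k-1) (n-k-1) 0 n + trm tabA tabA k (n-k-1) 0 n + trm tabB tabA (k-1) (n-k-1) 1 n))"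

definition TB :: "nat \<Rightarrow> real" where
 "TB n = real n * sing tabB (n-1) 0 n + sing tabC (n-1) 1 n
   + (1 / real n) * (\<Sum>k=1..n-1. real k *
       (real (k-1) * trm tabB tabA (k-1) (n-k-1) 0 n + trm tabB tabA k (n-k-1) 0 n + trm tabC tabA (k-1) (n-k-1) 1 n
       + (real (k-1) * trm tabA tabB (k-1) (n-k-1) 0 n + trm tabA tabB k (n-k-1) 0 n + trm tabB tabB (k-1) (n-k-1) 1 n)))"

lemma tab_small: "k < 20 \<Longrightarrow> 0 \<le> tabA k \<and> tabA k \<le> 5/2 \<and> 0 \<le> tabB k \<and> tabB k \<le> 5"
  by (simp add: tabA_def tabB_def less_Suc_eq numeral_eq_Suc)

lemma tabA_nonneg: "0 \<le> tabA k" using tab_small[of k] by (cases "k < 20") (auto simp: tabA_def)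
lemma tabB_nonneg: "0 \<le> tabB k" using tab_small[of k] by (cases "k < 20") (auto simp: tabB_def)
lemma tabA_le: "tabA k \<le> 5/2" using tab_small[of k] by (cases "k < 20") (auto simp: tabA_def)
lemma tabB_le: "tabB k \<le> 5" using tab_small[of k] by (cases "k < 20") (auto simp: tabB_def)
lemma tabC_nonneg: "0 \<le> tabC k" by (simp add: tabC_def tabB_nonneg)
lemma tabA0 [simp]: "tabA 0 = 3/2" by (simp add: tabA_def)
lemma tabB0 [simp]: "tabB 0 = 1" by (simp add: tabB_def)
lemma tabAbig: "k \<ge> 20 \<Longrightarrow> tabA k = 5/2" by (simp add: tabA_def)
lemma tabBbig: "k \<ge> 20 \<Longrightarrow> tabB k = 5" by (simp add: tabB_def)

lemma pw:
  assumes "(y::real) \<ge> 2" "m \<le> n + s"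
  shows "y^m / y^s \<le> (1/2)^(n+s-m) * y^n"
proof -
  have "y^m * 2^(n+s-m) \<le> y^m * y^(n+s-m)"
    using assms by (intro mult_left_mono power_mono) auto
  also have "\<dots> = y^(n+s)" using assms by (simp add: power_add[symmetric])
  also have "\<dots> = y^n * y^s" by (simp add: power_add)
  finally have "y^m * 2^(n+s-m) \<le> y^n * y^s" .
  hence "y^m / y^s \<le> y^n / 2^(n+s-m)"
    using assms by (simp add: field_simps)
  thus ?thesis by (simp add: power_one_over field_simps)
qed

lemma single_bd:
  assumes "(y::real) \<ge> 2" "0 \<le> U" "U \<le> fact a * y^(ep a) * f a" "0 \<le> f a" "ep a \<le> n + s"
  shows "U / y^s \<le> sing f a s n * y^n"
proof -
  have "U / y^s \<le> fact a * y^(ep a) * f a / y^s"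
    using assms by (intro divide_right_mono) auto
  also have "\<dots> = fact a * f a * (y^(ep a) / y^s)" by simp
  also have "\<dots> \<le> fact a * f a * ((1/2)^(n+s-ep a) * y^n)"
    using assms by (intro mult_left_mono pw) auto
  finally show ?thesis by (simp add: sing_def)
qed

lemma prod_bd:
  assumes "(y::real) \<ge> 2" "0 \<le> U" "U \<le> fact a * y^(ep a) * f a" "0 \<le> f a"
     "0 \<le> W" "W \<le> fact b * y^(ep b) * g b" "0 \<le> g b" "ep a + ep b \<le> n + s"
  shows "U / y^s * W \<le> trm f g a b s n * y^n"
proof -
  have "U / y^s * W \<le> (fact a * y^(ep a) * f a) / y^s * (fact b * y^(ep b) * g b)"
    using assms by (intro mult_mono divide_right_mono) auto
  also have "\<dots> = fact a * f a * fact b * g b * (y^(ep a + ep b) / y^s)" by (simp add: power_add)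
  also have "\<dots> \<le> fact a * f a * fact b * g b * ((1/2)^(n+s-(ep a + ep b)) * y^n)"
    using assms by (intro mult_left_mono pw) auto
  finally show ?thesis by (simp add: trm_def)
qed

definition H :: "real \<Rightarrow> nat \<Rightarrow> bool" where
  "H y j \<longleftrightarrow> A y j \<le> fact j * y^(ep j) * tabA j \<and> B y j \<le> fact j * y^(ep j) * tabB j"

lemma HC: assumes "y > 0" "H y j" shows "C y j \<le> fact j * y^(ep j) * tabC j"
proof -
  have "C y j \<le> real (j-1) * B y j" using C_le assms by auto
  also have "\<dots> \<le> real (j-1) * (fact j * y^(ep j) * tabB j)"
    using assms by (intro mult_left_mono) (auto simp: H_def)
  finally show ?thesis by (simp add: tabC_def mult_ac)
qed

lemma ep_facts:
  assumes "1 \<le> k" "k \<le> n - 1"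
  shows "ep (k-1) + ep (n-k-1) \<le> n" "ep k + ep (n-k-1) \<le> n" "ep (k-1) + ep (n-k-1) \<le> n + 1"
  using assms by (auto simp: ep_def max_def)

lemma step:
  assumes y: "y \<ge> 2" and n: "n \<ge> 1" and IH: "\<And>j. j < n \<Longrightarrow> H y j"
  shows "A y n \<le> TA n * y^n \<and> B y n \<le> TB n * y^n"
proof -
  have y0: "y > 0" "y \<ge> 0" using y by auto
  have hA: "\<And>j. j < n \<Longrightarrow> A y j \<le> fact j * y^(ep j) * tabA j" using IH by (auto simp: H_def)
  have hB: "\<And>j. j < n \<Longrightarrow> B y j \<le> fact j * y^(ep j) * tabB j" using IH by (auto simp: H_def)
  have hC: "\<And>j. j < n \<Longrightarrow> C y j \<le> fact j * y^(ep j) * tabC j" using IH HC y0 by auto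
  note nn = A_nonneg[OF y0(2)] B_nonneg[OF y0(2)] C_nonneg[OF y0(2)] tabA_nonneg tabB_nonneg tabC_nonneg
  have epn: "ep (n-1) \<le> n" using n by (simp add: ep_def)
  have L1: "real n * A y (n-1) \<le> real n * (sing tabA (n-1) 0 n * y^n)"
    using single_bd[OF y, of "A y (n-1)" "n-1" tabA n 0] hA[of "n-1"] nn epn n
    by (intro mult_left_mono) auto
  have L2: "B y (n-1) / y \<le> sing tabB (n-1) 1 n * y^n"
    using single_bd[OF y, of "B y (n-1)" "n-1" tabB n 1] hB[of "n-1"] nn epn n by auto
  have L3: "(\<Sum>k=1..n-1. real k *
          (real (k-1) * (A y (k-1) * A y (n-k-1)) + A y k * A y (n-k-1) + B y (k-1) / y * A y (n-k-1)))
      \<le> (\<Sum>k=1..n-1. real k *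
          (real (k-1) * (trm tabA tabA (k-1) (n-k-1) 0 n * y^n) + trm tabA tabA k (n-k-1) 0 n * y^n
           + trm tabB tabA (k-1) (n-k-1) 1 n * y^n))"
  proof (rule sum_mono)
    fix k assume k: "k \<in> {1..n-1}"
    hence k1: "1 \<le> k" "k \<le> n - 1" by auto
    have lt: "k - 1 < n" "k < n" "n - k - 1 < n" using k1 n by auto
    note ef = ep_facts[OF k1]
    have a1: "A y (k-1) * A y (n-k-1) \<le> trm tabA tabA (k-1) (n-k-1) 0 n * y^n"
      using prod_bd[OF y, of "A y (k-1)" "k-1" tabA "A y (n-k-1)" "n-k-1" tabA n 0] hA lt nn ef by auto
    have a2: "A y k * A y (n-k-1) \<le> trm tabA tabA k (n-k-1) 0 n * y^n"
      using prod_bd[OF y, of "A y k" "k" tabA "A y (n-k-1)" "n-k-1" tabA n 0] hA lt nn ef by auto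
    have a3: "B y (k-1) / y * A y (n-k-1) \<le> trm tabB tabA (k-1) (n-k-1) 1 n * y^n"
      using prod_bd[OF y, of "B y (k-1)" "k-1" tabB "A y (n-k-1)" "n-k-1" tabA n 1] hA hB lt nn ef by auto
    show "real k * (real (k-1) * (A y (k-1) * A y (n-k-1)) + A y k * A y (n-k-1) + B y (k-1) / y * A y (n-k-1))
       \<le> real k * (real (k-1) * (trm tabA tabA (k-1) (n-k-1) 0 n * y^n) + trm tabA tabA k (n-k-1) 0 n * y^n
           + trm tabB tabA (k-1) (n-k-1) 1 n * y^n)"
      using a1 a2 a3 by (intro mult_left_mono add_mono) auto
  qed
  have resA: "A y n \<le> TA n * y^n"
  proof -
    have "A y n \<le> real n * A y (n-1) + B y (n-1) / y + (1 / real n) * (\<Sum>k=1..n-1. real k *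
          (real (k-1) * (A y (k-1) * A y (n-k-1)) + A y k * A y (n-k-1) + B y (k-1) / y * A y (n-k-1)))"
      using ineqA[OF y0(1) n] .
    also have "\<dots> \<le> real n * (sing tabA (n-1) 0 n * y^n) + sing tabB (n-1) 1 n * y^n + (1 / real n) * (\<Sum>k=1..n-1. real k *
          (real (k-1) * (trm tabA tabA (k-1) (n-k-1) 0 n * y^n) + trm tabA tabA k (n-k-1) 0 n * y^n
           + trm tabB tabA (k-1) (n-k-1) 1 n * y^n))"
      by (rule add_mono[OF add_mono[OF L1 L2] mult_left_mono[OF L3]]) simp
    also have "\<dots> = TA n * y^n"
      unfolding TA_def by (simp add: algebra_simps sum_distrib_left sum_distrib_right)
    finally show ?thesis .
  qed
  have L1b: "real n * B y (n-1) \<le> real n * (sing tabB (n-1) 0 n * y^n)"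
    using single_bd[OF y, of "B y (n-1)" "n-1" tabB n 0] hB[of "n-1"] nn epn n
    by (intro mult_left_mono) auto
  have L2b: "C y (n-1) / y \<le> sing tabC (n-1) 1 n * y^n"
    using single_bd[OF y, of "C y (n-1)" "n-1" tabC n 1] hC[of "n-1"] nn epn n by auto
  have L3b: "(\<Sum>k=1..n-1. real k *
          (real (k-1) * (B y (k-1) * A y (n-k-1)) + B y k * A y (n-k-1) + C y (k-1) / y * A y (n-k-1)
          + (real (k-1) * (A y (k-1) * B y (n-k-1)) + A y k * B y (n-k-1) + B y (k-1) / y * B y (n-k-1))))
      \<le> (\<Sum>k=1..n-1. real k *
          (real (k-1) * (trm tabB tabA (k-1) (n-k-1) 0 n * y^n) + trm tabB tabA k (n-k-1) 0 n * y^n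
           + trm tabC tabA (k-1) (n-k-1) 1 n * y^n
          + (real (k-1) * (trm tabA tabB (k-1) (n-k-1) 0 n * y^n) + trm tabA tabB k (n-k-1) 0 n * y^n
           + trm tabB tabB (k-1) (n-k-1) 1 n * y^n)))"
  proof (rule sum_mono)
    fix k assume k: "k \<in> {1..n-1}"
    hence k1: "1 \<le> k" "k \<le> n - 1" by auto
    have lt: "k - 1 < n" "k < n" "n - k - 1 < n" using k1 n by auto
    note ef = ep_facts[OF k1]
    have a1: "B y (k-1) * A y (n-k-1) \<le> trm tabB tabA (k-1) (n-k-1) 0 n * y^n"
      using prod_bd[OF y, of "B y (k-1)" "k-1" tabB "A y (n-k-1)" "n-k-1" tabA n 0] hA hB lt nn ef by auto
    have a2: "B y k * A y (n-k-1) \<le> trm tabB tabA k (n-k-1) 0 n * y^n"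
      using prod_bd[OF y, of "B y k" "k" tabB "A y (n-k-1)" "n-k-1" tabA n 0] hA hB lt nn ef by auto
    have a3: "C y (k-1) / y * A y (n-k-1) \<le> trm tabC tabA (k-1) (n-k-1) 1 n * y^n"
      using prod_bd[OF y, of "C y (k-1)" "k-1" tabC "A y (n-k-1)" "n-k-1" tabA n 1] hA hC lt nn ef by auto
    have b1: "A y (k-1) * B y (n-k-1) \<le> trm tabA tabB (k-1) (n-k-1) 0 n * y^n"
      using prod_bd[OF y, of "A y (k-1)" "k-1" tabA "B y (n-k-1)" "n-k-1" tabB n 0] hA hB lt nn ef by auto
    have b2: "A y k * B y (n-k-1) \<le> trm tabA tabB k (n-k-1) 0 n * y^n"
      using prod_bd[OF y, of "A y k" "k" tabA "B y (n-k-1)" "n-k-1" tabB n 0] hA hB lt nn ef by auto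
    have b3: "B y (k-1) / y * B y (n-k-1) \<le> trm tabB tabB (k-1) (n-k-1) 1 n * y^n"
      using prod_bd[OF y, of "B y (k-1)" "k-1" tabB "B y (n-k-1)" "n-k-1" tabB n 1] hB lt nn ef by auto
    show "real k * (real (k-1) * (B y (k-1) * A y (n-k-1)) + B y k * A y (n-k-1) + C y (k-1) / y * A y (n-k-1)
          + (real (k-1) * (A y (k-1) * B y (n-k-1)) + A y k * B y (n-k-1) + B y (k-1) / y * B y (n-k-1)))
       \<le> real k * (real (k-1) * (trm tabB tabA (k-1) (n-k-1) 0 n * y^n) + trm tabB tabA k (n-k-1) 0 n * y^n
           + trm tabC tabA (k-1) (n-k-1) 1 n * y^n
          + (real (k-1) * (trm tabA tabB (k-1) (n-k-1) 0 n * y^n) + trm tabA tabB k (n-k-1) 0 n * y^n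
           + trm tabB tabB (k-1) (n-k-1) 1 n * y^n))"
      using a1 a2 a3 b1 b2 b3 by (intro mult_left_mono add_mono) auto
  qed
  have resB: "B y n \<le> TB n * y^n"
  proof -
    have "B y n \<le> real n * B y (n-1) + C y (n-1) / y + (1 / real n) * (\<Sum>k=1..n-1. real k *
          (real (k-1) * (B y (k-1) * A y (n-k-1)) + B y k * A y (n-k-1) + C y (k-1) / y * A y (n-k-1)
          + (real (k-1) * (A y (k-1) * B y (n-k-1)) + A y k * B y (n-k-1) + B y (k-1) / y * B y (n-k-1))))"
      using ineqB[OF y0(1) n] .
    also have "\<dots> \<le> real n * (sing tabB (n-1) 0 n * y^n) + sing tabC (n-1) 1 n * y^n + (1 / real n) * (\<Sum>k=1..n-1. real k *
          (real (k-1) * (trm tabB tabA (k-1) (n-k-1) 0 n * y^n) + trm tabB tabA k (n-k-1) 0 n * y^n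
           + trm tabC tabA (k-1) (n-k-1) 1 n * y^n
          + (real (k-1) * (trm tabA tabB (k-1) (n-k-1) 0 n * y^n) + trm tabA tabB k (n-k-1) 0 n * y^n
           + trm tabB tabB (k-1) (n-k-1) 1 n * y^n)))"
      by (rule add_mono[OF add_mono[OF L1b L2b] mult_left_mono[OF L3b]]) simp
    also have "\<dots> = TB n * y^n"
      unfolding TB_def by (simp add: algebra_simps sum_distrib_left sum_distrib_right)
    finally show ?thesis .
  qed
  show ?thesis using resA resB by simp
qed

lemma TA_1: "TA 1 \<le> fact 1 * tabA 1"
  unfolding TA_def sing_def trm_def atLeastAtMost_upt sum_set_upt_conv_sum_list_nat
  by (simp add: tabA_def tabB_def tabC_def ep_def upt_rec fact_numeral power_one_over)

lemma TB_1: "TB 1 \<le> fact 1 * tabB 1"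
  unfolding TB_def sing_def trm_def atLeastAtMost_upt sum_set_upt_conv_sum_list_nat
  by (simp add: tabA_def tabB_def tabC_def ep_def upt_rec fact_numeral power_one_over)

lemma TA_2: "TA 2 \<le> fact 2 * tabA 2"
  unfolding TA_def sing_def trm_def atLeastAtMost_upt sum_set_upt_conv_sum_list_nat
  by (simp add: tabA_def tabB_def tabC_def ep_def upt_rec fact_numeral power_one_over)

lemma TB_2: "TB 2 \<le> fact 2 * tabB 2"
  unfolding TB_def sing_def trm_def atLeastAtMost_upt sum_set_upt_conv_sum_list_nat
  by (simp add: tabA_def tabB_def tabC_def ep_def upt_rec fact_numeral power_one_over)

lemma TA_3: "TA 3 \<le> fact 3 * tabA 3"
  unfolding TA_def sing_def trm_def atLeastAtMost_upt sum_set_upt_conv_sum_list_nat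
  by (simp add: tabA_def tabB_def tabC_def ep_def upt_rec fact_numeral power_one_over)

lemma TB_3: "TB 3 \<le> fact 3 * tabB 3"
  unfolding TB_def sing_def trm_def atLeastAtMost_upt sum_set_upt_conv_sum_list_nat
  by (simp add: tabA_def tabB_def tabC_def ep_def upt_rec fact_numeral power_one_over)

lemma TA_4: "TA 4 \<le> fact 4 * tabA 4"
  unfolding TA_def sing_def trm_def atLeastAtMost_upt sum_set_upt_conv_sum_list_nat
  by (simp add: tabA_def tabB_def tabC_def ep_def upt_rec fact_numeral power_one_over)

lemma TB_4: "TB 4 \<le> fact 4 * tabB 4"
  unfolding TB_def sing_def trm_def atLeastAtMost_upt sum_set_upt_conv_sum_list_nat
  by (simp add: tabA_def tabB_def tabC_def ep_def upt_rec fact_numeral power_one_over)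

lemma TA_5: "TA 5 \<le> fact 5 * tabA 5"
  unfolding TA_def sing_def trm_def atLeastAtMost_upt sum_set_upt_conv_sum_list_nat
  by (simp add: tabA_def tabB_def tabC_def ep_def upt_rec fact_numeral power_one_over)

lemma TB_5: "TB 5 \<le> fact 5 * tabB 5"
  unfolding TB_def sing_def trm_def atLeastAtMost_upt sum_set_upt_conv_sum_list_nat
  by (simp add: tabA_def tabB_def tabC_def ep_def upt_rec fact_numeral power_one_over)

lemma TA_6: "TA 6 \<le> fact 6 * tabA 6"
  unfolding TA_def sing_def trm_def atLeastAtMost_upt sum_set_upt_conv_sum_list_nat
  by (simp add: tabA_def tabB_def tabC_def ep_def upt_rec fact_numeral power_one_over)

lemma TB_6: "TB 6 \<le> fact 6 * tabB 6"
  unfolding TB_def sing_def trm_def atLeastAtMost_upt sum_set_upt_conv_sum_list_nat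
  by (simp add: tabA_def tabB_def tabC_def ep_def upt_rec fact_numeral power_one_over)

lemma TA_7: "TA 7 \<le> fact 7 * tabA 7"
  unfolding TA_def sing_def trm_def atLeastAtMost_upt sum_set_upt_conv_sum_list_nat
  by (simp add: tabA_def tabB_def tabC_def ep_def upt_rec fact_numeral power_one_over)

lemma TB_7: "TB 7 \<le> fact 7 * tabB 7"
  unfolding TB_def sing_def trm_def atLeastAtMost_upt sum_set_upt_conv_sum_list_nat
  by (simp add: tabA_def tabB_def tabC_def ep_def upt_rec fact_numeral power_one_over)

lemma TA_8: "TA 8 \<le> fact 8 * tabA 8"
  unfolding TA_def sing_def trm_def atLeastAtMost_upt sum_set_upt_conv_sum_list_nat
  by (simp add: tabA_def tabB_def tabC_def ep_def upt_rec fact_numeral power_one_over)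

lemma TB_8: "TB 8 \<le> fact 8 * tabB 8"
  unfolding TB_def sing_def trm_def atLeastAtMost_upt sum_set_upt_conv_sum_list_nat
  by (simp add: tabA_def tabB_def tabC_def ep_def upt_rec fact_numeral power_one_over)

lemma TA_9: "TA 9 \<le> fact 9 * tabA 9"
  unfolding TA_def sing_def trm_def atLeastAtMost_upt sum_set_upt_conv_sum_list_nat
  by (simp add: tabA_def tabB_def tabC_def ep_def upt_rec fact_numeral power_one_over)

lemma TB_9: "TB 9 \<le> fact 9 * tabB 9"
  unfolding TB_def sing_def trm_def atLeastAtMost_upt sum_set_upt_conv_sum_list_nat
  by (simp add: tabA_def tabB_def tabC_def ep_def upt_rec fact_numeral power_one_over)

lemma TA_10: "TA 10 \<le> fact 10 * tabA 10"
  unfolding TA_def sing_def trm_def atLeastAtMost_upt sum_set_upt_conv_sum_list_nat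
  by (simp add: tabA_def tabB_def tabC_def ep_def upt_rec fact_numeral power_one_over)

lemma TB_10: "TB 10 \<le> fact 10 * tabB 10"
  unfolding TB_def sing_def trm_def atLeastAtMost_upt sum_set_upt_conv_sum_list_nat
  by (simp add: tabA_def tabB_def tabC_def ep_def upt_rec fact_numeral power_one_over)

lemma TA_11: "TA 11 \<le> fact 11 * tabA 11"
  unfolding TA_def sing_def trm_def atLeastAtMost_upt sum_set_upt_conv_sum_list_nat
  by (simp add: tabA_def tabB_def tabC_def ep_def upt_rec fact_numeral power_one_over)

lemma TB_11: "TB 11 \<le> fact 11 * tabB 11"
  unfolding TB_def sing_def trm_def atLeastAtMost_upt sum_set_upt_conv_sum_list_nat
  by (simp add: tabA_def tabB_def tabC_def ep_def upt_rec fact_numeral power_one_over)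

lemma TA_12: "TA 12 \<le> fact 12 * tabA 12"
  unfolding TA_def sing_def trm_def atLeastAtMost_upt sum_set_upt_conv_sum_list_nat
  by (simp add: tabA_def tabB_def tabC_def ep_def upt_rec fact_numeral power_one_over)

lemma TB_12: "TB 12 \<le> fact 12 * tabB 12"
  unfolding TB_def sing_def trm_def atLeastAtMost_upt sum_set_upt_conv_sum_list_nat
  by (simp add: tabA_def tabB_def tabC_def ep_def upt_rec fact_numeral power_one_over)

lemma TA_13: "TA 13 \<le> fact 13 * tabA 13"
  unfolding TA_def sing_def trm_def atLeastAtMost_upt sum_set_upt_conv_sum_list_nat
  by (simp add: tabA_def tabB_def tabC_def ep_def upt_rec fact_numeral power_one_over)

lemma TB_13: "TB 13 \<le> fact 13 * tabB 13"
  unfolding TB_def sing_def trm_def atLeastAtMost_upt sum_set_upt_conv_sum_list_nat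
  by (simp add: tabA_def tabB_def tabC_def ep_def upt_rec fact_numeral power_one_over)

lemma TA_14: "TA 14 \<le> fact 14 * tabA 14"
  unfolding TA_def sing_def trm_def atLeastAtMost_upt sum_set_upt_conv_sum_list_nat
  by (simp add: tabA_def tabB_def tabC_def ep_def upt_rec fact_numeral power_one_over)

lemma TB_14: "TB 14 \<le> fact 14 * tabB 14"
  unfolding TB_def sing_def trm_def atLeastAtMost_upt sum_set_upt_conv_sum_list_nat
  by (simp add: tabA_def tabB_def tabC_def ep_def upt_rec fact_numeral power_one_over)

lemma TA_15: "TA 15 \<le> fact 15 * tabA 15"
  unfolding TA_def sing_def trm_def atLeastAtMost_upt sum_set_upt_conv_sum_list_nat
  by (simp add: tabA_def tabB_def tabC_def ep_def upt_rec fact_numeral power_one_over)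

lemma TB_15: "TB 15 \<le> fact 15 * tabB 15"
  unfolding TB_def sing_def trm_def atLeastAtMost_upt sum_set_upt_conv_sum_list_nat
  by (simp add: tabA_def tabB_def tabC_def ep_def upt_rec fact_numeral power_one_over)

lemma TA_16: "TA 16 \<le> fact 16 * tabA 16"
  unfolding TA_def sing_def trm_def atLeastAtMost_upt sum_set_upt_conv_sum_list_nat
  by (simp add: tabA_def tabB_def tabC_def ep_def upt_rec fact_numeral power_one_over)

lemma TB_16: "TB 16 \<le> fact 16 * tabB 16"
  unfolding TB_def sing_def trm_def atLeastAtMost_upt sum_set_upt_conv_sum_list_nat
  by (simp add: tabA_def tabB_def tabC_def ep_def upt_rec fact_numeral power_one_over)

lemma TA_17: "TA 17 \<le> fact 17 * tabA 17"
  unfolding TA_def sing_def trm_def atLeastAtMost_upt sum_set_upt_conv_sum_list_nat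
  by (simp add: tabA_def tabB_def tabC_def ep_def upt_rec fact_numeral power_one_over)

lemma TB_17: "TB 17 \<le> fact 17 * tabB 17"
  unfolding TB_def sing_def trm_def atLeastAtMost_upt sum_set_upt_conv_sum_list_nat
  by (simp add: tabA_def tabB_def tabC_def ep_def upt_rec fact_numeral power_one_over)

lemma TA_18: "TA 18 \<le> fact 18 * tabA 18"
  unfolding TA_def sing_def trm_def atLeastAtMost_upt sum_set_upt_conv_sum_list_nat
  by (simp add: tabA_def tabB_def tabC_def ep_def upt_rec fact_numeral power_one_over)

lemma TB_18: "TB 18 \<le> fact 18 * tabB 18"
  unfolding TB_def sing_def trm_def atLeastAtMost_upt sum_set_upt_conv_sum_list_nat
  by (simp add: tabA_def tabB_def tabC_def ep_def upt_rec fact_numeral power_one_over)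

lemma TA_19: "TA 19 \<le> fact 19 * tabA 19"
  unfolding TA_def sing_def trm_def atLeastAtMost_upt sum_set_upt_conv_sum_list_nat
  by (simp add: tabA_def tabB_def tabC_def ep_def upt_rec fact_numeral power_one_over)

lemma TB_19: "TB 19 \<le> fact 19 * tabB 19"
  unfolding TB_def sing_def trm_def atLeastAtMost_upt sum_set_upt_conv_sum_list_nat
  by (simp add: tabA_def tabB_def tabC_def ep_def upt_rec fact_numeral power_one_over)

lemma binom2_le:
  assumes "2 \<le> k" "k + 2 \<le> m"
  shows "m choose 2 \<le> m choose k"
proof (cases "2 * k \<le> m")
  case True thus ?thesis using assms by (intro binomial_mono) auto
next
  case False
  hence "m choose (m - 2) \<le> m choose k"
    using assms by (intro binomial_antimono) auto
  moreover have "m choose (m - 2) = m choose 2"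
    using assms by (subst binomial_symmetric) auto
  ultimately show ?thesis by simp
qed

lemma ff:
  assumes "2 \<le> k" "k + 2 \<le> m"
  shows "fact k * fact (m - k) \<le> (2::nat) * fact (m - 2)"
proof -
  have e1: "fact k * fact (m - k) * (m choose k) = (fact m :: nat)"
    using assms by (intro binomial_fact_lemma) auto
  have e2: "fact 2 * fact (m - 2) * (m choose 2) = (fact m :: nat)"
    using assms by (intro binomial_fact_lemma) auto
  have pos: "m choose 2 > 0" using assms by simp
  have "fact k * fact (m - k) * (m choose 2) \<le> fact k * fact (m - k) * (m choose k)"
    using binom2_le[OF assms] by simp
  also have "\<dots> = 2 * fact (m - 2) * (m choose 2)" using e1 e2 by (simp add: fact_2)
  finally show ?thesis using pos by simp
qed

lemma ffr:
  assumes "2 \<le> k" "k + 2 \<le> m"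
  shows "fact k * fact (m - k) \<le> (2::real) * fact (m - 2)"
proof -
  have "real (fact k * fact (m - k)) \<le> real (2 * fact (m - 2))"
    using ff[OF assms] by (simp only: of_nat_le_iff)
  thus ?thesis by (simp add: of_nat_fact)
qed

lemma fact_pr: "m \<ge> 1 \<Longrightarrow> (fact m :: real) = real m * fact (m - 1)"
  by (simp add: fact_reduce)

lemma fact_n1: "n \<ge> 3 \<Longrightarrow> (fact (n-1) :: real) = real (n-1) * fact (n-2)"
  using fact_pr[of "n-1"] by (simp add: numeral_2_eq_2)

lemma fact_n2: "n \<ge> 4 \<Longrightarrow> (fact (n-2) :: real) = real (n-2) * fact (n-3)"
  using fact_pr[of "n-2"] by (simp add: numeral_2_eq_2 numeral_3_eq_3)

lemma Vbound:
  assumes "n \<ge> 5"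
  shows "(\<Sum>k=1..n-2. real k * fact k * fact (n-1-k)) \<le> 4 * (fact (n-1) :: real)"
proof -
  have S: "{1..n-2} = insert 1 (insert (n-2) {2..n-3})" using assms by auto
  have f1: "fact (n-2) \<le> (fact (n-1) :: real)" by (intro fact_mono) auto
  have f2: "real (n-2) * fact (n-2) \<le> (fact (n-1) :: real)"
  proof -
    have "fact (n-1) = real (n-1) * (fact (n-2) :: real)"
      using assms by (intro fact_n1) auto
    thus ?thesis by (simp add: mult_right_mono)
  qed
  have mid: "(\<Sum>k=2..n-3. real k * fact k * fact (n-1-k)) \<le> 2 * (fact (n-1) :: real)"
  proof -
    have "(\<Sum>k=2..n-3. real k * fact k * fact (n-1-k)) \<le> (\<Sum>k=2..n-3. 2 * (fact (n-2) :: real))"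
    proof (rule sum_mono)
      fix k assume k: "k \<in> {2..n-3}"
      have a: "fact k * fact (n - 1 - k) \<le> (2::real) * fact (n - 1 - 2)"
        using k assms by (intro ffr) auto
      have "real k * fact k * fact (n-1-k) \<le> real (n-3) * (2 * fact (n-3))"
      proof -
        have a': "fact k * fact (n - 1 - k) \<le> (2::real) * fact (n - 3)"
          using a by (simp add: numeral_3_eq_3 numeral_2_eq_2)
        have "real k \<le> real (n-3)" using k by auto
        hence "real k * (fact k * fact (n-1-k)) \<le> real (n-3) * (2 * fact (n-3))"
          by (rule mult_mono[OF _ a']) auto
        thus ?thesis by (simp add: mult.assoc)
      qed
      also have "\<dots> \<le> 2 * fact (n-2)"
      proof -
        have "real (n-3) * fact (n-3) \<le> (fact (n-2) :: real)"
        proof -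
          have "fact (n-2) = real (n-2) * (fact (n-3) :: real)"
            using assms by (intro fact_n2) auto
          thus ?thesis by (auto intro: mult_right_mono)
        qed
        thus ?thesis by simp
      qed
      finally show "real k * fact k * fact (n-1-k) \<le> 2 * fact (n-2)" .
    qed
    also have "\<dots> = real (n-4) * (2 * fact (n-2))" using assms by simp
    also have "\<dots> \<le> real (n-1) * (2 * fact (n-2))"
      by (intro mult_right_mono) auto
    also have "\<dots> = 2 * fact (n-1)"
      using assms fact_n1[of n] by simp
    finally show ?thesis .
  qed
  have "(\<Sum>k=1..n-2. real k * fact k * fact (n-1-k)) =
        fact (n-2) + (real (n-2) * fact (n-2) + (\<Sum>k=2..n-3. real k * fact k * fact (n-1-k)))"
    unfolding S using assms by (subst sum.insert; auto)+ (simp add: numeral_2_eq_2 Suc_diff_Suc)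
  also have "\<dots> \<le> fact (n-1) + (fact (n-1) + 2 * fact (n-1))"
    using f1 f2 mid by (intro add_mono) auto
  finally show ?thesis by simp
qed

lemma trm_le:
  assumes "0 \<le> f a" "f a \<le> p" "0 \<le> g b" "g b \<le> q" "r \<le> n + s - ep a - ep b"
  shows "trm f g a b s n \<le> fact a * fact b * p * q * (1/2)^r"
proof -
  have h: "(1/2::real)^(n + s - ep a - ep b) \<le> (1/2)^r"
    using assms by (intro power_decreasing) auto
  have "trm f g a b s n = (fact a * fact b) * (f a * g b) * (1/2)^(n + s - ep a - ep b)"
    by (simp add: trm_def mult_ac)
  also have "\<dots> \<le> (fact a * fact b) * (p * q) * (1/2)^r"
    using assms h by (intro mult_mono mult_left_mono) auto
  finally show ?thesis by (simp add: mult_ac)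
qed

lemma sing_le:
  assumes "0 \<le> f a" "f a \<le> p" "r \<le> n + s - ep a"
  shows "sing f a s n \<le> fact a * p * (1/2)^r"
proof -
  have h: "(1/2::real)^(n + s - ep a) \<le> (1/2)^r"
    using assms by (intro power_decreasing) auto
  show ?thesis unfolding sing_def using assms h by (intro mult_mono) auto
qed

lemma kfact: "k \<ge> 1 \<Longrightarrow> real (k-1) * fact (k-1) \<le> (fact k :: real)"
  using fact_pr[of k] by (simp add: mult_right_mono)

lemma tabC_le: "tabC j \<le> real j * 5"
  unfolding tabC_def using tabB_le[of j] tabB_nonneg[of j]
  by (intro mult_mono) auto

lemma midA:
  assumes "1 \<le> k" "k \<le> n - 2"
  shows "real k * (real (k-1) * trm tabA tabA (k-1) (n-k-1) 0 n + trm tabA tabA k (n-k-1) 0 n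
          + trm tabB tabA (k-1) (n-k-1) 1 n) \<le> 75/8 * (real k * fact k * fact (n-1-k))"
proof -
  let ?m = "n-k-1"
  have epm: "ep ?m = ?m" "ep k = k" "ep (k-1) \<le> k" using assms by (auto simp: ep_def)
  have t1: "trm tabA tabA (k-1) ?m 0 n \<le> fact (k-1) * fact ?m * (5/2) * (5/2) * (1/2)^1"
    using assms epm by (intro trm_le tabA_nonneg tabA_le) auto
  have t2: "trm tabA tabA k ?m 0 n \<le> fact k * fact ?m * (5/2) * (5/2) * (1/2)^1"
    using assms epm by (intro trm_le tabA_nonneg tabA_le) auto
  have t3: "trm tabB tabA (k-1) ?m 1 n \<le> fact (k-1) * fact ?m * 5 * (5/2) * (1/2)^2"
    using assms epm by (intro trm_le tabA_nonneg tabA_le tabB_nonneg tabB_le) auto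
  have kf: "real (k-1) * fact (k-1) \<le> (fact k :: real)" using kfact assms by auto
  have kf2: "fact (k-1) \<le> (fact k :: real)" by (intro fact_mono) auto
  have fm: "(0::real) \<le> fact ?m" by simp
  have "real (k-1) * trm tabA tabA (k-1) ?m 0 n + trm tabA tabA k ?m 0 n + trm tabB tabA (k-1) ?m 1 n
     \<le> (real (k-1) * fact (k-1)) * fact ?m * (25/8) + fact k * fact ?m * (25/8) + fact (k-1) * fact ?m * (25/8)"
  proof -
    have u1: "real (k-1) * trm tabA tabA (k-1) ?m 0 n \<le> (real (k-1) * fact (k-1)) * fact ?m * (25/8)"
    proof -
      have "real (k-1) * trm tabA tabA (k-1) ?m 0 n \<le> real (k-1) * (fact (k-1) * fact ?m * (5/2) * (5/2) * (1/2)^1)"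
        by (rule mult_left_mono[OF t1]) simp
      thus ?thesis by (simp add: mult_ac)
    qed
    have u2: "trm tabA tabA k ?m 0 n \<le> fact k * fact ?m * (25/8)" using t2 by simp
    have u3: "trm tabB tabA (k-1) ?m 1 n \<le> fact (k-1) * fact ?m * (25/8)" using t3 by (simp add: power2_eq_square)
    show ?thesis using u1 u2 u3 by linarith
  qed
  also have "\<dots> \<le> fact k * fact ?m * (25/8) + fact k * fact ?m * (25/8) + fact k * fact ?m * (25/8)"
    using kf kf2 fm by (intro add_mono mult_right_mono) auto
  finally have "real (k-1) * trm tabA tabA (k-1) ?m 0 n + trm tabA tabA k ?m 0 n + trm tabB tabA (k-1) ?m 1 n
     \<le> 75/8 * (fact k * fact ?m)" by simp
  hence "real k * (real (k-1) * trm tabA tabA (k-1) ?m 0 n + trm tabA tabA k ?m 0 n + trm tabB tabA (k-1) ?m 1 n)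
     \<le> real k * (75/8 * (fact k * fact ?m))" by (intro mult_left_mono) auto
  also have "?m = n-1-k" by simp
  finally show ?thesis by (simp add: mult_ac)
qed

lemma midB:
  assumes "1 \<le> k" "k \<le> n - 2"
  shows "real k * (real (k-1) * trm tabB tabA (k-1) (n-k-1) 0 n + trm tabB tabA k (n-k-1) 0 n + trm tabC tabA (k-1) (n-k-1) 1 n
          + (real (k-1) * trm tabA tabB (k-1) (n-k-1) 0 n + trm tabA tabB k (n-k-1) 0 n + trm tabB tabB (k-1) (n-k-1) 1 n))
        \<le> 275/8 * (real k * fact k * fact (n-1-k))"
proof -
  let ?m = "n-k-1"
  have epm: "ep ?m = ?m" "ep k = k" "ep (k-1) \<le> k" using assms by (auto simp: ep_def)
  have kf: "real (k-1) * fact (k-1) \<le> (fact k :: real)" using kfact assms by auto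
  have kf2: "fact (k-1) \<le> (fact k :: real)" by (intro fact_mono) auto
  have fm: "(0::real) \<le> fact ?m" by simp
  have fk: "(0::real) \<le> fact (k-1)" by simp
  have t1: "trm tabB tabA (k-1) ?m 0 n \<le> fact (k-1) * fact ?m * 5 * (5/2) * (1/2)^1"
    using assms epm by (intro trm_le tabA_nonneg tabA_le tabB_nonneg tabB_le) auto
  have t2: "trm tabB tabA k ?m 0 n \<le> fact k * fact ?m * 5 * (5/2) * (1/2)^1"
    using assms epm by (intro trm_le tabA_nonneg tabA_le tabB_nonneg tabB_le) auto
  have t3: "trm tabC tabA (k-1) ?m 1 n \<le> fact (k-1) * fact ?m * (real (k-1) * 5) * (5/2) * (1/2)^2"
    using assms epm by (intro trm_le tabA_nonneg tabA_le tabC_nonneg tabC_le) auto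
  have t4: "trm tabA tabB (k-1) ?m 0 n \<le> fact (k-1) * fact ?m * (5/2) * 5 * (1/2)^1"
    using assms epm by (intro trm_le tabA_nonneg tabA_le tabB_nonneg tabB_le) auto
  have t5: "trm tabA tabB k ?m 0 n \<le> fact k * fact ?m * (5/2) * 5 * (1/2)^1"
    using assms epm by (intro trm_le tabA_nonneg tabA_le tabB_nonneg tabB_le) auto
  have t6: "trm tabB tabB (k-1) ?m 1 n \<le> fact (k-1) * fact ?m * 5 * 5 * (1/2)^2"
    using assms epm by (intro trm_le tabB_nonneg tabB_le) auto
  have u1: "real (k-1) * trm tabB tabA (k-1) ?m 0 n \<le> (real (k-1) * fact (k-1)) * fact ?m * (25/4)"
  proof -
    have "real (k-1) * trm tabB tabA (k-1) ?m 0 n \<le> real (k-1) * (fact (k-1) * fact ?m * 5 * (5/2) * (1/2)^1)"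
      by (rule mult_left_mono[OF t1]) simp
    thus ?thesis by (simp add: mult_ac)
  qed
  have u4: "real (k-1) * trm tabA tabB (k-1) ?m 0 n \<le> (real (k-1) * fact (k-1)) * fact ?m * (25/4)"
  proof -
    have "real (k-1) * trm tabA tabB (k-1) ?m 0 n \<le> real (k-1) * (fact (k-1) * fact ?m * (5/2) * 5 * (1/2)^1)"
      by (rule mult_left_mono[OF t4]) simp
    thus ?thesis by (simp add: mult_ac)
  qed
  have u2: "trm tabB tabA k ?m 0 n \<le> fact k * fact ?m * (25/4)" using t2 by simp
  have u5: "trm tabA tabB k ?m 0 n \<le> fact k * fact ?m * (25/4)" using t5 by simp
  have u3: "trm tabC tabA (k-1) ?m 1 n \<le> (real (k-1) * fact (k-1)) * fact ?m * (25/8)"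
    using t3 by (simp add: power2_eq_square mult_ac)
  have u6: "trm tabB tabB (k-1) ?m 1 n \<le> fact (k-1) * fact ?m * (25/4)"
    using t6 by (simp add: power2_eq_square)
  have v1: "(real (k-1) * fact (k-1)) * fact ?m \<le> fact k * fact ?m" using kf fm by (rule mult_right_mono)
  have v2: "fact (k-1) * fact ?m \<le> fact k * (fact ?m :: real)" using kf2 fm by (rule mult_right_mono)
  have "real (k-1) * trm tabB tabA (k-1) ?m 0 n + trm tabB tabA k ?m 0 n + trm tabC tabA (k-1) ?m 1 n
          + (real (k-1) * trm tabA tabB (k-1) ?m 0 n + trm tabA tabB k ?m 0 n + trm tabB tabB (k-1) ?m 1 n)
     \<le> 275/8 * (fact k * fact ?m)"
    using u1 u2 u3 u4 u5 u6 v1 v2 by linarith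
  hence "real k * (real (k-1) * trm tabB tabA (k-1) ?m 0 n + trm tabB tabA k ?m 0 n + trm tabC tabA (k-1) ?m 1 n
          + (real (k-1) * trm tabA tabB (k-1) ?m 0 n + trm tabA tabB k ?m 0 n + trm tabB tabB (k-1) ?m 1 n))
     \<le> real k * (275/8 * (fact k * fact ?m))" by (intro mult_left_mono) auto
  also have "?m = n-1-k" by simp
  finally show ?thesis by (simp add: mult_ac)
qed

lemma endA:
  assumes "n \<ge> 3"
  shows "real (n-1) * (real (n-2) * trm tabA tabA (n-2) 0 0 n + trm tabA tabA (n-1) 0 0 n + trm tabB tabA (n-2) 0 1 n)
        \<le> 15/2 * (real (n-1) * fact (n-1))"
proof -
  have ep: "ep (n-2) = n-2" "ep (n-1) = n-1" "ep 0 = 1" using assms by (auto simp: ep_def)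
  have t1: "trm tabA tabA (n-2) 0 0 n \<le> fact (n-2) * fact 0 * (5/2) * (3/2) * (1/2)^1"
    using assms ep by (intro trm_le tabA_nonneg tabA_le) auto
  have t2: "trm tabA tabA (n-1) 0 0 n \<le> fact (n-1) * fact 0 * (5/2) * (3/2) * (1/2)^0"
    using assms ep by (intro trm_le tabA_nonneg tabA_le) auto
  have t3: "trm tabB tabA (n-2) 0 1 n \<le> fact (n-2) * fact 0 * 5 * (3/2) * (1/2)^2"
    using assms ep by (intro trm_le tabA_nonneg tabB_nonneg tabB_le) auto
  have f1: "real (n-2) * fact (n-2) \<le> (fact (n-1) :: real)" using fact_n1[OF assms] by (simp add: mult_right_mono)
  have f2: "fact (n-2) \<le> (fact (n-1) :: real)" by (intro fact_mono) auto
  have u1: "real (n-2) * trm tabA tabA (n-2) 0 0 n \<le> (real (n-2) * fact (n-2)) * (15/8)"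
  proof -
    have "real (n-2) * trm tabA tabA (n-2) 0 0 n \<le> real (n-2) * (fact (n-2) * fact 0 * (5/2) * (3/2) * (1/2)^1)"
      by (rule mult_left_mono[OF t1]) simp
    thus ?thesis by (simp add: mult_ac)
  qed
  have "real (n-2) * trm tabA tabA (n-2) 0 0 n + trm tabA tabA (n-1) 0 0 n + trm tabB tabA (n-2) 0 1 n
     \<le> 15/2 * fact (n-1)" (is "?I \<le> _")
    using u1 t2 t3 f1 f2 by (simp add: power2_eq_square)
  hence "real (n-1) * ?I \<le> real (n-1) * (15/2 * fact (n-1))" by (rule mult_left_mono) simp
  thus ?thesis by (simp add: mult_ac)
qed

lemma endB:
  assumes "n \<ge> 3"
  shows "real (n-1) * (real (n-2) * trm tabB tabA (n-2) 0 0 n + trm tabB tabA (n-1) 0 0 n + trm tabC tabA (n-2) 0 1 n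
          + (real (n-2) * trm tabA tabB (n-2) 0 0 n + trm tabA tabB (n-1) 0 0 n + trm tabB tabB (n-2) 0 1 n))
        \<le> 145/8 * (real (n-1) * fact (n-1))"
proof -
  have ep: "ep (n-2) = n-2" "ep (n-1) = n-1" "ep 0 = 1" using assms by (auto simp: ep_def)
  have t1: "trm tabB tabA (n-2) 0 0 n \<le> fact (n-2) * fact 0 * 5 * (3/2) * (1/2)^1"
    using assms ep by (intro trm_le tabA_nonneg tabB_le tabB_nonneg) auto
  have t2: "trm tabB tabA (n-1) 0 0 n \<le> fact (n-1) * fact 0 * 5 * (3/2) * (1/2)^0"
    using assms ep by (intro trm_le tabA_nonneg tabB_le tabB_nonneg) auto
  have t3: "trm tabC tabA (n-2) 0 1 n \<le> fact (n-2) * fact 0 * (real (n-2) * 5) * (3/2) * (1/2)^2"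
    using assms ep by (intro trm_le tabA_nonneg tabC_nonneg tabC_le) auto
  have t4: "trm tabA tabB (n-2) 0 0 n \<le> fact (n-2) * fact 0 * (5/2) * 1 * (1/2)^1"
    using assms ep by (intro trm_le tabA_nonneg tabA_le tabB_nonneg) auto
  have t5: "trm tabA tabB (n-1) 0 0 n \<le> fact (n-1) * fact 0 * (5/2) * 1 * (1/2)^0"
    using assms ep by (intro trm_le tabA_nonneg tabA_le tabB_nonneg) auto
  have t6: "trm tabB tabB (n-2) 0 1 n \<le> fact (n-2) * fact 0 * 5 * 1 * (1/2)^2"
    using assms ep by (intro trm_le tabB_nonneg tabB_le) auto
  have f1: "real (n-2) * fact (n-2) \<le> (fact (n-1) :: real)" using fact_n1[OF assms] by (simp add: mult_right_mono)
  have f2: "fact (n-2) \<le> (fact (n-1) :: real)" by (intro fact_mono) auto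
  have u1: "real (n-2) * trm tabB tabA (n-2) 0 0 n \<le> (real (n-2) * fact (n-2)) * (15/4)"
  proof -
    have "real (n-2) * trm tabB tabA (n-2) 0 0 n \<le> real (n-2) * (fact (n-2) * fact 0 * 5 * (3/2) * (1/2)^1)"
      by (rule mult_left_mono[OF t1]) simp
    thus ?thesis by (simp add: mult_ac)
  qed
  have u4: "real (n-2) * trm tabA tabB (n-2) 0 0 n \<le> (real (n-2) * fact (n-2)) * (5/4)"
  proof -
    have "real (n-2) * trm tabA tabB (n-2) 0 0 n \<le> real (n-2) * (fact (n-2) * fact 0 * (5/2) * 1 * (1/2)^1)"
      by (rule mult_left_mono[OF t4]) simp
    thus ?thesis by (simp add: mult_ac)
  qed
  have u3: "trm tabC tabA (n-2) 0 1 n \<le> (real (n-2) * fact (n-2)) * (15/8)"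
    using t3 by (simp add: power2_eq_square mult_ac)
  have "real (n-2) * trm tabB tabA (n-2) 0 0 n + trm tabB tabA (n-1) 0 0 n + trm tabC tabA (n-2) 0 1 n
          + (real (n-2) * trm tabA tabB (n-2) 0 0 n + trm tabA tabB (n-1) 0 0 n + trm tabB tabB (n-2) 0 1 n)
     \<le> 145/8 * fact (n-1)" (is "?I \<le> _")
    using u1 u3 u4 t2 t5 t6 f1 f2 by (simp add: power2_eq_square)
  hence "real (n-1) * ?I \<le> real (n-1) * (145/8 * fact (n-1))" by (rule mult_left_mono) simp
  thus ?thesis by (simp add: mult_ac)
qed

lemma sum_split_last:
  fixes n :: nat
  assumes "n \<ge> 3"
  shows "(\<Sum>k=1..n-1. g k) = (\<Sum>k=1..n-2. g k) + (g (n-1) :: real)"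
proof -
  have e: "{1..n-1} = insert (n-1) {1..n-2}" using assms by auto
  have ni: "n - 1 \<notin> {1..n-2}" using assms by auto
  show ?thesis unfolding e using ni by (simp add: add.commute)
qed

lemma TA_big:
  assumes n: "n \<ge> 20"
  shows "TA n \<le> fact n * tabA n"
proof -
  define F where "F = (fact (n-1) :: real)"
  have Fpos: "F > 0" by (simp add: F_def)
  have fn: "fact n = real n * F" unfolding F_def using n by (intro fact_pr) auto
  have epn: "ep (n-1) = n-1" using n by (simp add: ep_def)
  have l1: "sing tabA (n-1) 0 n \<le> F * (5/2) * (1/2)^1"
    unfolding F_def using n epn by (intro sing_le tabA_nonneg tabA_le) auto
  have l2: "sing tabB (n-1) 1 n \<le> F * 5 * (1/2)^2"
    unfolding F_def using n epn by (intro sing_le tabB_nonneg tabB_le) auto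
  let ?g = "\<lambda>k. real k * (real (k-1) * trm tabA tabA (k-1) (n-k-1) 0 n + trm tabA tabA k (n-k-1) 0 n
          + trm tabB tabA (k-1) (n-k-1) 1 n)"
  have s1: "(\<Sum>k=1..n-2. ?g k) \<le> 75/8 * (4 * F)"
  proof -
    have "(\<Sum>k=1..n-2. ?g k) \<le> (\<Sum>k=1..n-2. 75/8 * (real k * fact k * fact (n-1-k)))"
      by (intro sum_mono midA) auto
    also have "\<dots> = 75/8 * (\<Sum>k=1..n-2. real k * fact k * fact (n-1-k))" by (simp add: sum_distrib_left)
    also have "\<dots> \<le> 75/8 * (4 * F)" unfolding F_def using n by (intro mult_left_mono Vbound) auto
    finally show ?thesis .
  qed
  have s2: "?g (n-1) \<le> 15/2 * (real (n-1) * F)"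
  proof -
    have "n - 1 - 1 = n - 2" "n - (n-1) - 1 = 0" using n by auto
    thus ?thesis using endA[of n] n unfolding F_def by simp
  qed
  have "TA n = real n * sing tabA (n-1) 0 n + sing tabB (n-1) 1 n + (1 / real n) * ((\<Sum>k=1..n-2. ?g k) + ?g (n-1))"
    unfolding TA_def using n by (subst sum_split_last[symmetric]) auto
  also have "\<dots> \<le> real n * (F * (5/2) * (1/2)^1) + F * 5 * (1/2)^2 + (1 / real n) * (75/8 * (4 * F) + 15/2 * (real (n-1) * F))"
    using l1 l2 s1 s2 n by (intro add_mono mult_left_mono) auto
  also have "\<dots> = F * (real n * (5/4) + 5/4 + (75/2) / real n + 15/2 * (real (n-1) / real n))"
    using n by (simp add: field_simps)
  also have "\<dots> \<le> F * (real n * (5/2))"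
  proof (rule mult_left_mono)
    have n20: "real n \<ge> 20" using n by simp
    have a: "(75/2) / real n \<le> 75/40" using n by (simp add: field_simps)
    have b: "real (n-1) / real n \<le> 1" using n by (simp add: field_simps)
    show "real n * (5/4) + 5/4 + (75/2) / real n + 15/2 * (real (n-1) / real n) \<le> real n * (5/2)"
      using a b n20 by linarith
  qed (use Fpos in auto)
  also have "\<dots> = fact n * tabA n" using fn tabAbig[OF n] by simp
  finally show ?thesis .
qed

lemma TB_big:
  assumes n: "n \<ge> 20"
  shows "TB n \<le> fact n * tabB n"
proof -
  define F where "F = (fact (n-1) :: real)"
  have Fpos: "F > 0" by (simp add: F_def)
  have fn: "fact n = real n * F" unfolding F_def using n by (intro fact_pr) auto
  have epn: "ep (n-1) = n-1" using n by (simp add: ep_def)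
  have l1: "sing tabB (n-1) 0 n \<le> F * 5 * (1/2)^1"
    unfolding F_def using n epn by (intro sing_le tabB_nonneg tabB_le) auto
  have l2: "sing tabC (n-1) 1 n \<le> F * (real (n-1) * 5) * (1/2)^2"
    unfolding F_def using n epn by (intro sing_le tabC_nonneg tabC_le) auto
  let ?g = "\<lambda>k. real k * (real (k-1) * trm tabB tabA (k-1) (n-k-1) 0 n + trm tabB tabA k (n-k-1) 0 n + trm tabC tabA (k-1) (n-k-1) 1 n
          + (real (k-1) * trm tabA tabB (k-1) (n-k-1) 0 n + trm tabA tabB k (n-k-1) 0 n + trm tabB tabB (k-1) (n-k-1) 1 n))"
  have s1: "(\<Sum>k=1..n-2. ?g k) \<le> 275/8 * (4 * F)"
  proof -
    have "(\<Sum>k=1..n-2. ?g k) \<le> (\<Sum>k=1..n-2. 275/8 * (real k * fact k * fact (n-1-k)))"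
      by (intro sum_mono midB) auto
    also have "\<dots> = 275/8 * (\<Sum>k=1..n-2. real k * fact k * fact (n-1-k))" by (simp add: sum_distrib_left)
    also have "\<dots> \<le> 275/8 * (4 * F)" unfolding F_def using n by (intro mult_left_mono Vbound) auto
    finally show ?thesis .
  qed
  have s2: "?g (n-1) \<le> 145/8 * (real (n-1) * F)"
  proof -
    have "n - 1 - 1 = n - 2" "n - (n-1) - 1 = 0" using n by auto
    thus ?thesis using endB[of n] n unfolding F_def by simp
  qed
  have "TB n = real n * sing tabB (n-1) 0 n + sing tabC (n-1) 1 n + (1 / real n) * ((\<Sum>k=1..n-2. ?g k) + ?g (n-1))"
    unfolding TB_def using n by (subst sum_split_last[symmetric]) auto
  also have "\<dots> \<le> real n * (F * 5 * (1/2)^1) + F * (real (n-1) * 5) * (1/2)^2 + (1 / real n) * (275/8 * (4 * F) + 145/8 * (real (n-1) * F))"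
    using l1 l2 s1 s2 n by (intro add_mono mult_left_mono) auto
  also have "\<dots> = F * (real n * (5/2) + real (n-1) * (5/4) + (275/2) / real n + 145/8 * (real (n-1) / real n))"
    using n by (simp add: field_simps)
  also have "\<dots> \<le> F * (real n * 5)"
  proof (rule mult_left_mono)
    have n20: "real n \<ge> 20" using n by simp
    have a: "(275/2) / real n \<le> 275/40" using n by (simp add: field_simps)
    have b: "real (n-1) / real n \<le> 1" using n by (simp add: field_simps)
    have c: "real (n-1) = real n - 1" using n by simp
    show "real n * (5/2) + real (n-1) * (5/4) + (275/2) / real n + 145/8 * (real (n-1) / real n) \<le> real n * 5"
      using a b c n20 by linarith
  qed (use Fpos in auto)
  also have "\<dots> = fact n * tabB n" using fn tabBbig[OF n] by simp
  finally show ?thesis .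
qed

lemma T_all:
  assumes "n \<ge> 1"
  shows "TA n \<le> fact n * tabA n \<and> TB n \<le> fact n * tabB n"
proof (cases "n \<ge> 20")
  case True thus ?thesis using TA_big TB_big by auto
next
  case False
  hence "n = 1 \<or> n = 2 \<or> n = 3 \<or> n = 4 \<or> n = 5 \<or> n = 6 \<or> n = 7 \<or> n = 8 \<or> n = 9 \<or> n = 10 \<or>
         n = 11 \<or> n = 12 \<or> n = 13 \<or> n = 14 \<or> n = 15 \<or> n = 16 \<or> n = 17 \<or> n = 18 \<or> n = 19"
    using assms by presburger
  thus ?thesis
    using TA_1 TA_2 TA_3 TA_4 TA_5 TA_6 TA_7 TA_8 TA_9 TA_10 TA_11 TA_12 TA_13 TA_14 TA_15 TA_16 TA_17 TA_18 TA_19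
          TB_1 TB_2 TB_3 TB_4 TB_5 TB_6 TB_7 TB_8 TB_9 TB_10 TB_11 TB_12 TB_13 TB_14 TB_15 TB_16 TB_17 TB_18 TB_19
    by (elim disjE) simp_all
qed

lemma mv_lin: "y \<ge> 0 \<Longrightarrow> mv [:a, b:] y = \<bar>a\<bar> + \<bar>b\<bar> * y"
proof -
  have "pabs [:a, b:] = [:\<bar>a\<bar>, \<bar>b\<bar>:]" by (rule poly_eqI) (simp add: coeff_pCons split: nat.split)
  thus "mv [:a, b:] y = \<bar>a\<bar> + \<bar>b\<bar> * y" by (simp add: mv_def)
qed

lemma H_all:
  assumes y: "y \<ge> 2"
  shows "H y n"
proof (induction n rule: less_induct)
  case (less n)
  show ?case
  proof (cases "n = 0")
    case True
    have a: "A y 0 = 1 + y" using y by (simp add: A_def P_0 mv_lin)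
    have pd: "pderiv (P 0) = [:1:]" by (simp add: P_0 pderiv_pCons)
    have p1: "pabs [:1:] = [:1:]" by (rule poly_eqI) (simp add: coeff_pCons split: nat.split)
    have b: "B y 0 = y" using y by (simp add: B_def pd mv_def p1)
    show ?thesis using True a b y by (simp add: H_def ep_def)
  next
    case False
    hence n: "n \<ge> 1" by simp
    have s: "A y n \<le> TA n * y^n \<and> B y n \<le> TB n * y^n" using step[OF y n] less by blast
    have t: "TA n \<le> fact n * tabA n \<and> TB n \<le> fact n * tabB n" using T_all[OF n] .
    have yn: "y^n \<ge> 0" using y by simp
    have "A y n \<le> fact n * tabA n * y^n" using s t yn by (meson mult_right_mono order.trans)
    moreover have "B y n \<le> fact n * tabB n * y^n" using s t yn by (meson mult_right_mono order.trans)
    ultimately show ?thesis using n by (simp add: H_def ep_def mult_ac)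
  qed
qed

theorem theorem5p9:
  shows "(\<forall>(y::real) n::nat. y \<ge> 2 \<and> n \<ge> 1 \<longrightarrow>
            \<bar>poly (P n) y\<bar> \<le> 3 * fact n * y ^ n)
       \<and> (\<forall>y::real. y \<ge> 2 \<longrightarrow> \<bar>poly (P 0) y\<bar> \<le> y)"
proof (intro conjI allI impI)
  fix y :: real and n :: nat
  assume h: "y \<ge> 2 \<and> n \<ge> 1"
  hence y: "y \<ge> 2" and n: "n \<ge> 1" by auto
  have "\<bar>poly (P n) y\<bar> \<le> A y n" unfolding A_def using y by (intro abs_poly_le_mv) auto
  also have "\<dots> \<le> fact n * y^(ep n) * tabA n" using H_all[OF y] by (simp add: H_def)
  also have "\<dots> = fact n * y^n * tabA n" using n by (simp add: ep_def)
  also have "\<dots> \<le> fact n * y^n * 3" using tabA_le[of n] y by (intro mult_left_mono) auto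
  finally show "\<bar>poly (P n) y\<bar> \<le> 3 * fact n * y ^ n" by (simp add: mult_ac)
next
  fix y :: real
  assume "y \<ge> 2"
  thus "\<bar>poly (P 0) y\<bar> \<le> y" by (simp add: P_0)
qed

end
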